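(* Every connected (finite, simple) graph $G$ satisfies $\mathrm{rc}(G) \leq 3\,\mathrm{f}(G) - 1$.
   Context: For an edge-coloring of a graph $G$, a path is rainbow if no two of its edges have the same color; $G$ is rainbow-connected if every pair of vertices is joined by a rainbow path. The rainbow connection number $\mathrm{rc}(G)$ is the minimum number of colors in an edge-coloring making $G$ rainbow-connected. The forest number $\mathrm{f}(G)$ is the maximum number of vertices of an induced subgraph of $G$ that is a forest. *)

theory Defs
  imports Main
begin

definition simple_graph :: "'a set \<Rightarrow> 'a set set \<Rightarrow> bool" where
  "simple_graph V E \<longleftrightarrow> finite V \<and> (\<forall>e\<in>E. e \<subseteq> V \<and> card e = 2)"

fun walk_edges :: "'a list \<Rightarrow> 'a set list" where
  "walk_edges (x # y # xs) = {x, y} # walk_edges (y # xs)"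
| "walk_edges _ = []"

definition is_path :: "'a set \<Rightarrow> 'a set set \<Rightarrow> 'a list \<Rightarrow> 'a \<Rightarrow> 'a \<Rightarrow> bool" where
  "is_path V E p u v \<longleftrightarrow> p \<noteq> [] \<and> hd p = u \<and> last p = v \<and> distinct p \<and>
     set p \<subseteq> V \<and> set (walk_edges p) \<subseteq> E"

definition connected_graph :: "'a set \<Rightarrow> 'a set set \<Rightarrow> bool" where
  "connected_graph V E \<longleftrightarrow> (\<forall>u\<in>V. \<forall>v\<in>V. \<exists>p. is_path V E p u v)"

definition rainbow_path :: "('a set \<Rightarrow> nat) \<Rightarrow> 'a list \<Rightarrow> bool" where
  "rainbow_path c p \<longleftrightarrow> distinct (map c (walk_edges p))"

definition rainbow_connected :: "'a set \<Rightarrow> 'a set set \<Rightarrow> ('a set \<Rightarrow> nat) \<Rightarrow> bool" where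
  "rainbow_connected V E c \<longleftrightarrow>
     (\<forall>u\<in>V. \<forall>v\<in>V. \<exists>p. is_path V E p u v \<and> rainbow_path c p)"

definition rc :: "'a set \<Rightarrow> 'a set set \<Rightarrow> nat" where
  "rc V E = (LEAST k. \<exists>c. (\<forall>e\<in>E. c e < k) \<and> rainbow_connected V E c)"

definition induced_edges :: "'a set set \<Rightarrow> 'a set \<Rightarrow> 'a set set" where
  "induced_edges E S = {e \<in> E. e \<subseteq> S}"

definition is_cycle :: "'a set \<Rightarrow> 'a set set \<Rightarrow> 'a list \<Rightarrow> bool" where
  "is_cycle V E cs \<longleftrightarrow> length cs \<ge> 3 \<and> distinct cs \<and> set cs \<subseteq> V \<and>
     set (walk_edges cs) \<subseteq> E \<and> {last cs, hd cs} \<in> E"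

definition is_forest :: "'a set \<Rightarrow> 'a set set \<Rightarrow> bool" where
  "is_forest V E \<longleftrightarrow> \<not> (\<exists>cs. is_cycle V E cs)"

definition forest_number :: "'a set \<Rightarrow> 'a set set \<Rightarrow> nat" where
  "forest_number V E = Max {card S | S. S \<subseteq> V \<and> is_forest S (induced_edges E S)}"

end

theory Submission
  imports Defs
begin

lemma we_append: "walk_edges (xs @ ys) = walk_edges xs @ (if xs \<noteq> [] \<and> ys \<noteq> [] then [{last xs, hd ys}] else []) @ walk_edges ys"
proof (induction xs rule: walk_edges.induct)
  case (1 x y xs) then show ?case by auto
next
  case ("2_1") then show ?case by simp
next
  case ("2_2" x) then show ?case by (cases ys) auto
qed

lemma we_Cons: "p \<noteq> [] \<Longrightarrow> walk_edges (x # p) = {x, hd p} # walk_edges p"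
  by (cases p) auto

lemma we_mem: "e \<in> set (walk_edges p) \<Longrightarrow> \<exists>x y. e = {x,y} \<and> x \<in> set p \<and> y \<in> set p"
  by (induction p rule: walk_edges.induct) auto

lemma we_sub: "e \<in> set (walk_edges p) \<Longrightarrow> e \<subseteq> set p"
  using we_mem by fastforce

lemma cross: "l \<noteq> [] \<Longrightarrow> hd l \<notin> Q \<Longrightarrow> last l \<in> Q \<Longrightarrow>
   \<exists>a b. {a,b} \<in> set (walk_edges l) \<and> a \<notin> Q \<and> b \<in> Q \<and> a \<in> set l"
proof (induction l rule: walk_edges.induct)
  case (1 x y xs)
  show ?case
  proof (cases "y \<in> Q")
    case True then show ?thesis using 1 by auto
  next
    case False
    then obtain a b where "{a,b} \<in> set (walk_edges (y # xs)) \<and> a \<notin> Q \<and> b \<in> Q \<and> a \<in> set (y#xs)"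
      using 1 by auto
    then show ?thesis by auto
  qed
qed auto

lemma distinct_hd_last: "distinct xs \<Longrightarrow> length xs \<ge> 2 \<Longrightarrow> hd xs \<noteq> last xs"
  by (cases xs) auto

lemma two_nbrs:
  assumes sg: "simple_graph V E" and FV: "F \<subseteq> V"
    and forestF: "is_forest F (induced_edges E F)"
    and maxF: "\<And>S. S \<subseteq> V \<Longrightarrow> is_forest S (induced_edges E S) \<Longrightarrow> card S \<le> card F"
    and vV: "v \<in> V" and vF: "v \<notin> F"
  shows "\<exists>a b. a \<in> F \<and> b \<in> F \<and> a \<noteq> b \<and> {v,a} \<in> E \<and> {v,b} \<in> E"
proof (rule ccontr)
  assume H: "\<not> ?thesis"
  have finF: "finite F" using sg FV unfolding simple_graph_def using finite_subset by blast
  have "is_forest (insert v F) (induced_edges E (insert v F))"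
    unfolding is_forest_def
  proof
    assume "\<exists>cs. is_cycle (insert v F) (induced_edges E (insert v F)) cs"
    then obtain cs where cy: "is_cycle (insert v F) (induced_edges E (insert v F)) cs" by blast
    have csne: "cs \<noteq> []" using cy unfolding is_cycle_def by auto
    show False
    proof (cases "v \<in> set cs")
      case False
      have sF: "set cs \<subseteq> F" using False cy unfolding is_cycle_def by auto
      have "is_cycle F (induced_edges E F) cs"
      proof -
        have a1: "set (walk_edges cs) \<subseteq> induced_edges E F"
        proof
          fix e assume e: "e \<in> set (walk_edges cs)"
          then have "e \<in> E" using cy unfolding is_cycle_def induced_edges_def by blast
          moreover have "e \<subseteq> F" using we_sub[OF e] sF by blast
          ultimately show "e \<in> induced_edges E F" unfolding induced_edges_def by blast
        qed
        have a2: "{last cs, hd cs} \<in> induced_edges E F"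
          using cy sF csne unfolding is_cycle_def induced_edges_def by auto
        show ?thesis using a1 a2 cy sF unfolding is_cycle_def by blast
      qed
      then show False using forestF unfolding is_forest_def by blast
    next
      case True
      then obtain a b where cs: "cs = a @ v # b" by (meson split_list)
      have key: "\<And>x. x \<in> set cs \<Longrightarrow> x \<noteq> v \<Longrightarrow> x \<in> F"
        using cy unfolding is_cycle_def by auto
      have edge: "\<And>x y. {x,y} \<in> set (walk_edges cs) \<Longrightarrow> {x,y} \<in> E"
        using cy unfolding is_cycle_def induced_edges_def by auto
      have closing: "{last cs, hd cs} \<in> E"
        using cy unfolding is_cycle_def induced_edges_def by auto
      have dist: "distinct cs" and len: "length cs \<ge> 3" using cy unfolding is_cycle_def by auto
      have "\<exists>a1 b1. a1 \<in> set cs \<and> b1 \<in> set cs \<and> a1 \<noteq> v \<and> b1 \<noteq> v \<and> a1 \<noteq> b1 \<and> {v,a1} \<in> E \<and> {v,b1} \<in> E"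
      proof (cases "a = []")
        case True
        then have cs2: "cs = v # b" using cs by simp
        have bl: "length b \<ge> 2" using len cs2 by simp
        then have bne: "b \<noteq> []" by auto
        have "hd b \<noteq> last b" using distinct_hd_last[of b] dist cs2 bl by simp
        moreover have "{v, hd b} \<in> E" using edge[of v "hd b"] cs2 we_Cons[OF bne, of v] by simp
        moreover have "{v, last b} \<in> E" proof -
          have "{last b, v} \<in> E" using closing cs2 bne by simp
          then show ?thesis by (metis insert_commute)
        qed
        moreover have "hd b \<in> set cs" "last b \<in> set cs" using cs2 bne by auto
        moreover have "hd b \<noteq> v" "last b \<noteq> v" using dist cs2 bne by auto
        ultimately show ?thesis by (intro exI[of _ "hd b"] exI[of _ "last b"] conjI) simp_all
      next
        case False
        note ane = False
        have e1: "{last a, v} \<in> E" using edge[of "last a" v] ane cs we_append[of a "v # b"] by simp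
        have e1': "{v, last a} \<in> E" using e1 by (metis insert_commute)
        have la: "last a \<in> set cs" "last a \<noteq> v" using ane cs dist by auto
        show ?thesis
        proof (cases "b = []")
          case True
          then have cs2: "cs = a @ [v]" using cs by simp
          have al: "length a \<ge> 2" using len cs2 by simp
          have "hd a \<noteq> last a" using distinct_hd_last[of a] dist cs2 al by simp
          moreover have "{v, hd a} \<in> E" using closing cs2 ane by simp
          moreover have "hd a \<in> set cs" "hd a \<noteq> v" using cs2 ane dist by auto
          ultimately show ?thesis using e1' la by (intro exI[of _ "last a"] exI[of _ "hd a"] conjI) simp_all
        next
          case False
          have w1: "walk_edges cs = walk_edges a @ [{last a, v}] @ walk_edges (v # b)"
            unfolding cs using we_append[of a "v # b"] ane by simp
          have w2: "walk_edges (v # b) = {v, hd b} # walk_edges b" using we_Cons[OF False] .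
          have "{v, hd b} \<in> set (walk_edges cs)" unfolding w1 w2 by simp
          then have "{v, hd b} \<in> E" using edge by blast
          moreover have "hd b \<in> set cs" "hd b \<noteq> v" using cs False dist by auto
          moreover have "last a \<noteq> hd b" proof -
            have "last a \<in> set a" "hd b \<in> set b" using ane False by auto
            moreover have "set a \<inter> set b = {}" using dist cs by auto
            ultimately show ?thesis by (metis disjoint_iff)
          qed
          ultimately show ?thesis using e1' la by (intro exI[of _ "last a"] exI[of _ "hd b"] conjI) simp_all
        qed
      qed
      then obtain a1 b1 where "a1 \<in> set cs" "b1 \<in> set cs" "a1 \<noteq> v" "b1 \<noteq> v" "a1 \<noteq> b1" "{v,a1} \<in> E" "{v,b1} \<in> E" by blast
      moreover then have "a1 \<in> F" "b1 \<in> F" using key by auto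
      ultimately show False using H by blast
    qed
  qed
  then have "card (insert v F) \<le> card F" using maxF FV vV by blast
  then show False using finF vF by simp
qed


definition goodset :: "'a set \<Rightarrow> 'a set set \<Rightarrow> 'a set \<Rightarrow> ('a set \<Rightarrow> nat) \<Rightarrow> nat \<Rightarrow> bool" where
  "goodset V E S c b \<longleftrightarrow> S \<subseteq> V \<and> (\<forall>x\<in>S. \<forall>y\<in>S. \<exists>p. is_path V E p x y \<and> set p \<subseteq> S \<and>
      rainbow_path c p \<and> (\<forall>e\<in>set (walk_edges p). c e < b))"

lemma goodset_add:
  assumes g: "goodset V E S c b" and sS: "s \<in> S" and wV: "w \<in> V" and wS: "w \<notin> S"
    and sw: "{s,w} \<in> E"
  shows "goodset V E (insert w S) (c({s,w} := b)) (Suc b)"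
proof -
  let ?c = "c({s,w} := b)"
  have SV: "S \<subseteq> V" using g unfolding goodset_def by auto
  have old: "\<exists>p. is_path V E p x y \<and> set p \<subseteq> S \<and> rainbow_path ?c p \<and> (\<forall>e\<in>set (walk_edges p). ?c e < b)"
    if xy: "x \<in> S" "y \<in> S" for x y
  proof -
    obtain p where p: "is_path V E p x y" "set p \<subseteq> S" "rainbow_path c p" "\<forall>e\<in>set (walk_edges p). c e < b"
      using g xy unfolding goodset_def by blast
    have eq: "\<And>e. e \<in> set (walk_edges p) \<Longrightarrow> ?c e = c e"
    proof -
      fix e assume "e \<in> set (walk_edges p)"
      then have "e \<subseteq> S" using we_sub p(2) by blast
      then have "e \<noteq> {s,w}" using wS by auto
      then show "?c e = c e" by simp
    qed
    have m: "map ?c (walk_edges p) = map c (walk_edges p)" by (rule map_cong[OF refl eq])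
    have "rainbow_path ?c p" unfolding rainbow_path_def m using p(3) unfolding rainbow_path_def .
    moreover have "\<forall>e\<in>set (walk_edges p). ?c e < b" using p(4) eq by simp
    ultimately show ?thesis using p(1,2) by blast
  qed
  show ?thesis
    unfolding goodset_def
  proof (intro conjI ballI)
    show "insert w S \<subseteq> V" using SV wV by auto
  next
    fix x y assume x: "x \<in> insert w S" and y: "y \<in> insert w S"
    show "\<exists>p. is_path V E p x y \<and> set p \<subseteq> insert w S \<and> rainbow_path ?c p \<and> (\<forall>e\<in>set (walk_edges p). ?c e < Suc b)"
    proof (cases "x = w")
      case xw: True
      show ?thesis
      proof (cases "y = w")
        case True
        then show ?thesis using xw wV by (auto simp: is_path_def rainbow_path_def)
      next
        case False
        then have yS: "y \<in> S" using y by auto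
        obtain p where p: "is_path V E p s y" "set p \<subseteq> S" "rainbow_path ?c p" "\<forall>e\<in>set (walk_edges p). ?c e < b"
          using old[OF sS yS] by blast
        have pne: "p \<noteq> []" and hp: "hd p = s" using p(1) unfolding is_path_def by auto
        have we: "walk_edges (w # p) = {s, w} # walk_edges p" using we_Cons[OF pne, of w] hp by (simp add: insert_commute)
        have "is_path V E (w # p) x y" using p(1) p(2) wS wV xw sw pne we unfolding is_path_def by auto
        moreover have "rainbow_path ?c (w # p)" using p(3) p(4) we unfolding rainbow_path_def by auto
        moreover have "\<forall>e\<in>set (walk_edges (w#p)). ?c e < Suc b" unfolding we using p(4) by (auto intro: less_SucI simp del: fun_upd_apply simp add: fun_upd_same)
        ultimately have "is_path V E (w # p) x y \<and> set (w # p) \<subseteq> insert w S \<and> rainbow_path ?c (w # p) \<and> (\<forall>e\<in>set (walk_edges (w # p)). ?c e < Suc b)"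
          using p(2) by (auto simp del: fun_upd_apply)
        then show ?thesis by blast
      qed
    next
      case False
      then have xS: "x \<in> S" using x by auto
      show ?thesis
      proof (cases "y = w")
        case yw: True
        obtain p where p: "is_path V E p x s" "set p \<subseteq> S" "rainbow_path ?c p" "\<forall>e\<in>set (walk_edges p). ?c e < b"
          using old[OF xS sS] by blast
        have pne: "p \<noteq> []" and lp: "last p = s" using p(1) unfolding is_path_def by auto
        have we: "walk_edges (p @ [w]) = walk_edges p @ [{s, w}]" using we_append[of p "[w]"] pne lp by simp
        have "is_path V E (p @ [w]) x y" using p(1) p(2) wS wV yw sw pne we unfolding is_path_def by auto
        moreover have "rainbow_path ?c (p @ [w])" using p(3) p(4) we unfolding rainbow_path_def by auto
        moreover have "\<forall>e\<in>set (walk_edges (p @ [w])). ?c e < Suc b" unfolding we using p(4) by (auto intro: less_SucI simp del: fun_upd_apply simp add: fun_upd_same)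
        ultimately have "is_path V E (p @ [w]) x y \<and> set (p @ [w]) \<subseteq> insert w S \<and> rainbow_path ?c (p @ [w]) \<and> (\<forall>e\<in>set (walk_edges (p @ [w])). ?c e < Suc b)"
          using p(2) by (auto simp del: fun_upd_apply)
        then show ?thesis by blast
      next
        case False
        then have yS: "y \<in> S" using y by auto
        show ?thesis using old[OF xS yS] by fastforce
      qed
    qed
  qed
qed



lemma edge_facts:
  assumes "simple_graph V E" "{a,b} \<in> E"
  shows "a \<in> V" "b \<in> V" "a \<noteq> b"
proof -
  have "{a,b} \<subseteq> V" "card {a,b} = 2" using assms unfolding simple_graph_def by auto
  then show "a \<in> V" "b \<in> V" "a \<noteq> b" by (auto simp: card_insert_if split: if_splits)
qed

lemma crossV:
  assumes "connected_graph V E" "x \<in> V" "y \<in> V" "x \<notin> Q" "y \<in> Q"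
  shows "\<exists>a b. {a,b} \<in> E \<and> a \<in> V \<and> a \<notin> Q \<and> b \<in> Q"
proof -
  obtain p where p: "is_path V E p x y" using assms unfolding connected_graph_def by blast
  then have "p \<noteq> []" "hd p \<notin> Q" "last p \<in> Q" using assms unfolding is_path_def by auto
  then obtain a b where ab: "{a,b} \<in> set (walk_edges p)" "a \<notin> Q" "b \<in> Q" "a \<in> set p"
    using cross by blast
  then show ?thesis using p unfolding is_path_def by blast
qed

lemma card_helper:
  assumes "finite F" "u \<in> F" "u \<notin> S" "S \<subseteq> T" "T \<inter> F \<subseteq> insert u S" "u \<in> T"
  shows "card (F - T) = card (F - S) - 1" "card (T \<inter> F) = Suc (card (S \<inter> F))"
proof -
  have "F - T = (F - S) - {u}" using assms by auto
  then show "card (F - T) = card (F - S) - 1" using assms by (simp add: card_Diff_singleton)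
  have "T \<inter> F = insert u (S \<inter> F)" using assms by auto
  then show "card (T \<inter> F) = Suc (card (S \<inter> F))" using assms by simp
qed

lemma grow:
  assumes sg: "simple_graph V E" and conn: "connected_graph V E" and FV: "F \<subseteq> V"
    and dom: "\<forall>ov\<in>V-F. \<exists>z\<in>F. {ov,z} \<in> E"
  shows "card (F - S) = n \<Longrightarrow> goodset V E S c b \<Longrightarrow> b + 3 \<le> 3 * card (S \<inter> F) \<Longrightarrow>
    \<exists>S' c' b'. goodset V E S' c' b' \<and> F \<subseteq> S' \<and> b' + 3 \<le> 3 * card F"
proof (induction n arbitrary: S c b)
  have finF: "finite F" using sg FV unfolding simple_graph_def using finite_subset by blast
  {
  case 0
  then have "F \<subseteq> S" using finF by auto
  moreover have "card (S \<inter> F) \<le> card F" using finF by (simp add: card_mono)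
  ultimately show ?case using 0 by (intro exI[of _ S] exI[of _ c] exI[of _ b]) auto
  next
  case (Suc n)
  have SV: "S \<subseteq> V" using Suc.prems unfolding goodset_def by auto
  obtain y where y: "y \<in> F" "y \<notin> S" using Suc.prems(1) by (metis Diff_eq_empty_iff card_0_eq finF finite_Diff nat.distinct(1) subsetI)
  have "card (S \<inter> F) \<noteq> 0" using Suc.prems(3) by auto
  then obtain x where x: "x \<in> S" by (metis card.empty disjoint_iff inf_bot_left)
  define Q where "Q = (F - S) \<union> {ov \<in> V - S - F. \<exists>u\<in>F-S. {ov,u} \<in> E}"
  have "x \<notin> Q" "y \<in> Q" using x y unfolding Q_def by auto
  then obtain a bb where ab: "{a,bb} \<in> E" "a \<in> V" "a \<notin> Q" "bb \<in> Q"
    using crossV[OF conn, of x y Q] x y SV FV by blast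
  have aneb: "a \<noteq> bb" and bbV: "bb \<in> V" using edge_facts[OF sg ab(1)] by auto
  have fin: "\<And>T c2 b2 u. goodset V E T c2 b2 \<Longrightarrow> u \<in> F \<Longrightarrow> u \<notin> S \<Longrightarrow> S \<subseteq> T \<Longrightarrow>
      T \<inter> F \<subseteq> insert u S \<Longrightarrow> u \<in> T \<Longrightarrow> b2 \<le> b + 3 \<Longrightarrow> ?case"
  proof -
    fix T c2 b2 u assume g: "goodset V E T c2 b2" and h: "u \<in> F" "u \<notin> S" "S \<subseteq> T"
      "T \<inter> F \<subseteq> insert u S" "u \<in> T" and bb: "b2 \<le> b + 3"
    note ch = card_helper[OF finF h]
    have "card (F - T) = n" using ch Suc.prems(1) by simp
    moreover have "b2 + 3 \<le> 3 * card (T \<inter> F)" using ch Suc.prems(3) bb by simp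
    ultimately show ?case using Suc.IH g by blast
  qed
  show ?case
  proof (cases "a \<in> S")
    case aS: True
    show ?thesis
    proof (cases "bb \<in> F - S")
      case True
      have "goodset V E (insert bb S) (c({a,bb} := b)) (Suc b)"
        using goodset_add[OF Suc.prems(2) aS bbV _ ab(1)] True by auto
      then show ?thesis by (rule fin[of _ _ _ bb]) (use True in auto)
    next
      case False
      then obtain u where u: "bb \<in> V - S - F" "u \<in> F - S" "{bb,u} \<in> E" using ab(4) unfolding Q_def by auto
      have g1: "goodset V E (insert bb S) (c({a,bb} := b)) (Suc b)"
        using goodset_add[OF Suc.prems(2) aS bbV _ ab(1)] u by auto
      have uV: "u \<in> V" using u FV by auto
      have "goodset V E (insert u (insert bb S)) ((c({a,bb} := b))({bb,u} := Suc b)) (Suc (Suc b))"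
        using goodset_add[OF g1 _ uV _ u(3)] u by auto
      then show ?thesis by (rule fin[of _ _ _ u]) (use u in auto)
    qed
  next
    case aS: False
    have aF: "a \<notin> F" using aS ab(3) unfolding Q_def by auto
    then obtain z where z: "z \<in> F" "{a,z} \<in> E" using dom ab(2) by auto
    have zS: "z \<in> S"
    proof (rule ccontr)
      assume "z \<notin> S"
      then have "a \<in> Q" using z aS aF ab(2) unfolding Q_def by auto
      then show False using ab(3) by simp
    qed
    have bbnot: "bb \<notin> F - S"
    proof
      assume "bb \<in> F - S"
      then have "a \<in> Q" using ab aS aF unfolding Q_def by auto
      then show False using ab(3) by simp
    qed
    then obtain u where u: "bb \<in> V - S - F" "u \<in> F - S" "{bb,u} \<in> E" using ab(4) unfolding Q_def by auto
    have za: "{z,a} \<in> E" using z(2) by (metis insert_commute)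
    have g1: "goodset V E (insert a S) (c({z,a} := b)) (Suc b)"
      using goodset_add[OF Suc.prems(2) zS ab(2) aS za] .
    have g2: "goodset V E (insert bb (insert a S)) ((c({z,a} := b))({a,bb} := Suc b)) (Suc (Suc b))"
      using goodset_add[OF g1 _ bbV _ ab(1)] u aneb by auto
    have uV: "u \<in> V" using u FV by auto
    have "goodset V E (insert u (insert bb (insert a S))) (((c({z,a} := b))({a,bb} := Suc b))({bb,u} := Suc (Suc b))) (Suc (Suc (Suc b)))"
      using goodset_add[OF g2 _ uV _ u(3)] u aF by auto
    then show ?thesis by (rule fin[of _ _ _ u]) (use u aF in auto)
  qed
  }
qed



lemma single_forest: "is_forest {v} E'"
  unfolding is_forest_def is_cycle_def
proof
  assume "\<exists>cs. 3 \<le> length cs \<and> distinct cs \<and> set cs \<subseteq> {v} \<and> set (walk_edges cs) \<subseteq> E' \<and> {last cs, hd cs} \<in> E'"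
  then obtain cs where "3 \<le> length cs" "distinct cs" "set cs \<subseteq> {v}" by blast
  moreover have "card (set cs) \<le> card {v}" using \<open>set cs \<subseteq> {v}\<close> by (intro card_mono) auto
  ultimately show False using distinct_card[of cs] by simp
qed

theorem theorem2:
  fixes V :: "'a set" and E :: "'a set set"
  assumes "simple_graph V E" and "V \<noteq> {}" and "connected_graph V E"
  shows "int (rc V E) \<le> 3 * int (forest_number V E) - 1"
proof -
  note sg = assms(1) and conn = assms(3)
  have finV: "finite V" using sg unfolding simple_graph_def by auto
  define C where "C = {card S | S. S \<subseteq> V \<and> is_forest S (induced_edges E S)}"
  have finC: "finite C" unfolding C_def using finV by auto
  obtain v0 where v0: "v0 \<in> V" using assms(2) by auto
  have "1 \<in> C" unfolding C_def using v0 single_forest by (intro CollectI exI[of _ "{v0}"]) auto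
  then have Cne: "C \<noteq> {}" by auto
  have "forest_number V E \<in> C" unfolding forest_number_def C_def[symmetric] using Max_in[OF finC Cne] .
  then obtain F where F: "F \<subseteq> V" "is_forest F (induced_edges E F)" "card F = forest_number V E"
    unfolding C_def by auto
  have maxF: "\<And>S. S \<subseteq> V \<Longrightarrow> is_forest S (induced_edges E S) \<Longrightarrow> card S \<le> card F"
  proof -
    fix S assume "S \<subseteq> V" "is_forest S (induced_edges E S)"
    then have "card S \<in> C" unfolding C_def by auto
    then show "card S \<le> card F" using F(3) Max_ge[OF finC] unfolding forest_number_def C_def[symmetric] by auto
  qed
  have finF: "finite F" using F(1) finV finite_subset by blast
  have "1 \<le> card F" using maxF[of "{v0}"] v0 single_forest[of v0 "induced_edges E {v0}"] by simp
  then have "F \<noteq> {}" by auto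
  then obtain s0 where s0: "s0 \<in> F" by blast
  have nb: "\<And>u. u \<in> V \<Longrightarrow> u \<notin> F \<Longrightarrow> \<exists>a b. a \<in> F \<and> b \<in> F \<and> a \<noteq> b \<and> {u,a} \<in> E \<and> {u,b} \<in> E"
    using two_nbrs[OF sg F(1) F(2) maxF] by blast
  have dom: "\<forall>ov\<in>V-F. \<exists>z\<in>F. {ov,z} \<in> E" using nb by blast
  have g0: "goodset V E {s0} (\<lambda>_. 0) 0"
    unfolding goodset_def is_path_def rainbow_path_def using s0 F(1)
    by (auto intro!: exI[of _ "[s0]"])
  have "b + 3 \<le> 3 * card ({s0} \<inter> F)" if "b = 0" for b :: nat using s0 that by simp
  then obtain D c b where D: "goodset V E D c b" "F \<subseteq> D" "b + 3 \<le> 3 * card F"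
    using grow[OF sg conn F(1) dom refl g0] by auto
  have DV: "D \<subseteq> V" using D(1) unfolding goodset_def by auto
  have "\<forall>u\<in>V-D. \<exists>a. \<exists>bb. a \<in> F \<and> bb \<in> F \<and> a \<noteq> bb \<and> {u,a} \<in> E \<and> {u,bb} \<in> E"
    using nb D(2) by blast
  then have "\<exists>A. \<forall>u\<in>V-D. \<exists>bb. A u \<in> F \<and> bb \<in> F \<and> A u \<noteq> bb \<and> {u,A u} \<in> E \<and> {u,bb} \<in> E"
    by (rule bchoice)
  then obtain A where "\<forall>u\<in>V-D. \<exists>bb. A u \<in> F \<and> bb \<in> F \<and> A u \<noteq> bb \<and> {u,A u} \<in> E \<and> {u,bb} \<in> E"
    by blast
  then have "\<exists>B. \<forall>u\<in>V-D. A u \<in> F \<and> B u \<in> F \<and> A u \<noteq> B u \<and> {u,A u} \<in> E \<and> {u,B u} \<in> E"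
    by (rule bchoice)
  then obtain B where AB: "\<forall>u\<in>V-D. A u \<in> F \<and> B u \<in> F \<and> A u \<noteq> B u \<and> {u,A u} \<in> E \<and> {u,B u} \<in> E"
    by blast
  have ABD: "\<And>u. u \<in> V - D \<Longrightarrow> A u \<in> D \<and> B u \<in> D" using AB D(2) by blast
  define c' where "c' e = (if \<exists>u\<in>V-D. e = {u, A u} then b else if \<exists>u\<in>V-D. e = {u, B u} then Suc b
     else if c e < b then c e else b)" for e
  have c'bound: "c' e < Suc (Suc b)" for e unfolding c'_def by auto
  have c'D: "c' e = c e" if "e \<subseteq> D" "c e < b" for e
  proof -
    have "\<not> (\<exists>u\<in>V-D. e = {u, A u})" "\<not> (\<exists>u\<in>V-D. e = {u, B u})" using that by auto
    then show ?thesis unfolding c'_def using that by simp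
  qed
  have c'A: "c' {u, A u} = b" if "u \<in> V - D" for u unfolding c'_def using that by auto
  have c'B: "c' {u, B u} = Suc b" if u: "u \<in> V - D" for u
  proof -
    have "\<not> (\<exists>u'\<in>V-D. {u, B u} = {u', A u'})"
    proof
      assume "\<exists>u'\<in>V-D. {u, B u} = {u', A u'}"
      then obtain u' where u': "u' \<in> V - D" "{u, B u} = {u', A u'}" by blast
      have "B u \<in> D" "A u' \<in> D" using ABD u u'(1) by auto
      then have e: "u = u' \<and> B u = A u'" using u u'(2) unfolding doubleton_eq_iff by auto
      have ne: "A u \<noteq> B u" using AB u by blast
      from e have "B u = A u" by (elim conjE) hypsubst
      with ne show False by simp
    qed
    then show ?thesis unfolding c'_def using u by auto
  qed
  have inD: "\<exists>p. is_path V E p x y \<and> set p \<subseteq> D \<and> rainbow_path c' p \<and> (\<forall>e\<in>set (walk_edges p). c' e < b)"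
    if xy: "x \<in> D" "y \<in> D" for x y
  proof -
    obtain p where p: "is_path V E p x y" "set p \<subseteq> D" "rainbow_path c p" "\<forall>e\<in>set (walk_edges p). c e < b"
      using D(1) xy unfolding goodset_def by blast
    have eq: "\<And>e. e \<in> set (walk_edges p) \<Longrightarrow> c' e = c e"
    proof -
      fix e assume e: "e \<in> set (walk_edges p)"
      have "e \<subseteq> D" using we_sub[OF e] p(2) by blast
      moreover have "c e < b" using p(4) e by blast
      ultimately show "c' e = c e" by (rule c'D)
    qed
    have m: "map c' (walk_edges p) = map c (walk_edges p)" by (rule map_cong[OF refl eq])
    have "rainbow_path c' p" unfolding rainbow_path_def m using p(3) unfolding rainbow_path_def .
    moreover have "\<forall>e\<in>set (walk_edges p). c' e < b" using p(4) eq by simp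
    ultimately show ?thesis using p(1,2) by blast
  qed
  have rcon: "rainbow_connected V E c'"
    unfolding rainbow_connected_def
  proof (intro ballI)
    fix x y assume x: "x \<in> V" and y: "y \<in> V"
    show "\<exists>p. is_path V E p x y \<and> rainbow_path c' p"
    proof (cases "x \<in> D")
      case xD: True
      show ?thesis
      proof (cases "y \<in> D")
        case True
        then show ?thesis using inD xD by blast
      next
        case False
        then have yD: "y \<in> V - D" using y by auto
        obtain p where p: "is_path V E p x (A y)" "set p \<subseteq> D" "rainbow_path c' p" "\<forall>e\<in>set (walk_edges p). c' e < b"
          using inD[OF xD] ABD[OF yD] by blast
        have pne: "p \<noteq> []" and lp: "last p = A y" using p(1) unfolding is_path_def by auto
        have we: "walk_edges (p @ [y]) = walk_edges p @ [{y, A y}]"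
          using we_append[of p "[y]"] pne lp by (simp add: insert_commute)
        have "is_path V E (p @ [y]) x y" using p(1) p(2) yD AB pne we unfolding is_path_def by auto
        moreover have "rainbow_path c' (p @ [y])" using p(3) p(4) we c'A[OF yD] unfolding rainbow_path_def by auto
        ultimately show ?thesis by blast
      qed
    next
      case xD: False
      then have xD': "x \<in> V - D" using x by auto
      show ?thesis
      proof (cases "y \<in> D")
        case True
        obtain p where p: "is_path V E p (A x) y" "set p \<subseteq> D" "rainbow_path c' p" "\<forall>e\<in>set (walk_edges p). c' e < b"
          using inD True ABD[OF xD'] by blast
        have pne: "p \<noteq> []" and hp: "hd p = A x" using p(1) unfolding is_path_def by auto
        have we: "walk_edges (x # p) = {x, A x} # walk_edges p" using we_Cons[OF pne, of x] hp by simp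
        have "is_path V E (x # p) x y" using p(1) p(2) xD' AB pne we unfolding is_path_def by auto
        moreover have "rainbow_path c' (x # p)" using p(3) p(4) we c'A[OF xD'] unfolding rainbow_path_def by auto
        ultimately show ?thesis by blast
      next
        case False
        then have yD: "y \<in> V - D" using y by auto
        show ?thesis
        proof (cases "x = y")
          case True
          then show ?thesis using x by (intro exI[of _ "[x]"]) (auto simp: is_path_def rainbow_path_def)
        next
          case False
          obtain p where p: "is_path V E p (A x) (B y)" "set p \<subseteq> D" "rainbow_path c' p" "\<forall>e\<in>set (walk_edges p). c' e < b"
            using inD ABD[OF xD'] ABD[OF yD] by blast
          have pne: "p \<noteq> []" and hp: "hd p = A x" and lp: "last p = B y" using p(1) unfolding is_path_def by auto
          have we: "walk_edges (x # p @ [y]) = {x, A x} # walk_edges p @ [{y, B y}]"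
            using we_Cons[of "p @ [y]" x] we_append[of p "[y]"] pne hp lp by (simp add: insert_commute)
          have "is_path V E (x # p @ [y]) x y" using p(1) p(2) xD' yD False AB pne we unfolding is_path_def by auto
          moreover have "rainbow_path c' (x # p @ [y])" using p(3) p(4) we c'A[OF xD'] c'B[OF yD] unfolding rainbow_path_def by auto
          ultimately show ?thesis by blast
        qed
      qed
    qed
  qed
  have ex: "\<exists>cc. (\<forall>e\<in>E. cc e < Suc (Suc b)) \<and> rainbow_connected V E cc"
    using c'bound rcon by blast
  have "rc V E \<le> Suc (Suc b)"
    unfolding rc_def by (rule Least_le) (rule ex)
  then have "rc V E + 1 \<le> 3 * forest_number V E" using D(3) F(3) by linarith
  then have "int (rc V E + 1) \<le> int (3 * forest_number V E)" by (simp only: of_nat_le_iff)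
  then show ?thesis by simp
qed

end
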